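(* Let $\mathcal{A}$ be an attacker, $W$ a world, $m\in\mathbb{N}$, $\Sigma,\Sigma'$ lock sets, $\tau,\tau'$ labeled types and $e,e'$ expressions. If $(e,e',W,\Sigma,\Sigma',m)\in\mathcal{E}^{\mathcal{A}}[\![\tau']\!]$, $\Sigma\approx_{\mathcal{A}}\Sigma'$, $\tau'|_{\Sigma}<:\tau$ and $\tau'|_{\Sigma'}<:\tau$, then $(\mathsf{new}(e,\tau),\mathsf{new}(e',\tau),W,\Sigma,\Sigma',m)\in\mathcal{E}^{\mathcal{A}}[\![(\mathsf{ref}\,\tau)^{\bot}]\!]$.
   Context: **Policies.** Fix a set of actors $a$ and a set of locks $\sigma$. A lock set $\Sigma$ is a set of locks. A clause is a pair $(\Sigma \Rightarrow a)$; a policy $p$ is a set of clauses. $p \sqsubseteq q$ iff for every $(\Sigma_2\Rightarrow a)\in q$ there is $(\Sigma_1\Rightarrow a)\in p$ with $\Sigma_1\subseteq\Sigma_2$. $\bot=\{(\emptyset\Rightarrow a)\mid a \text{ an actor}\}$. Specialization: $p|_\Sigma=\{(\Sigma_1\setminus\Sigma\Rightarrow a)\mid(\Sigma_1\Rightarrow a)\in p\}$. A fixed function $\mathrm{LockPolicy}$ assigns a policy to each lock. **Types.** Raw types $A ::= \mathsf{unit}\mid\mathsf{nat}\mid \tau_1+\tau_2\mid\tau_1\times\tau_2\mid \mathsf{ref}\,\tau\mid \tau_1\xrightarrow{\Sigma,p}\tau_2$; labeled types $\tau ::= A^p$. For $\tau=A^p$: $\tau\sqsubseteq q$ means $p\sqsubseteq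 q$; $\tau|_\Sigma = A^{p|_\Sigma}$. **Subtyping** $<:$: $A^p<:B^{p'}$ if $p\sqsubseteq p'$ and $A<:B$; $\mathsf{unit}<:\mathsf{unit}$; $\mathsf{nat}<:\mathsf{nat}$; $\mathsf{ref}\,\tau<:\mathsf{ref}\,\tau$; $\tau_0\times\tau_2<:\tau_1\times\tau_3$ and $\tau_0+\tau_2<:\tau_1+\tau_3$ if $\tau_0<:\tau_1,\tau_2<:\tau_3$; $\tau_1\xrightarrow{\Sigma,p}\tau_2<:\tau_0\xrightarrow{\Sigma',p'}\tau_3$ if $\tau_0<:\tau_1$, $\tau_2<:\tau_3$, $p'\sqsubseteq p$, $\Sigma\subseteq\Sigma'$. **Syntax.** Expressions: $x\mid ()\mid n\ (n\in\mathbb{N})\mid \lambda x.e\mid (e,e')\mid \mathsf{fst}(e)\mid\mathsf{snd}(e)\mid\mathsf{inl}(e)\mid\mathsf{inr}(e)\mid \mathsf{case}\ e\ \mathsf{of}\ \mathsf{inl}\,x\Rightarrow e'\mid\mathsf{inr}\,y\Rightarrow e''\mid e\,e'\mid \mathsf{new}(e,\tau)\mid\ !e\mid e:=e'\mid \mathsf{open}\ \sigma\ \mathsf{in}\ e\mid\mathsf{opened}\ \sigma\ \mathsf{in}\ e\mid\mathsf{close}\ \sigma\ \mathsf{in}\ e\mid\mathsf{closed}\ \sigma\ \mathsf{in}\ e\mid \mathsf{when}\ \sigma\ \mathsf{then}\ e\ \mathsf{else}\ e'\mid l$ ($l$ ranging over a countably infinite set of locations). Values: $v::=\lambda x.e\mid(v,v')\mid\mathsf{inl}(v)\mid\mathsf{inr}(v)\mid()\mid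 l\mid n$; $\mathcal{V}$ is the set of values. A state $S$ is a finite map from locations to pairs $(v,\tau)$; write $S(l)=v$, $\mathrm{type}(S,l)=\tau$. A state environment $\theta$ is a finite map from locations to labeled types; $\theta'\sqsupseteq\theta$ iff $\theta\subseteq\theta'$ as graphs. **Observations.** $\omega::=\varepsilon\mid \mathsf{wr}_{l,\tau}(v)\mid\mathsf{open}(\sigma)\mid\mathsf{close}(\sigma)\mid\mathsf{unopen}(\sigma)\mid\mathsf{unclose}(\sigma)$. $\mathrm{pol}(\mathsf{wr}_{l,A^p}(v))=p$; the policy of each of the four lock observations on $\sigma$ is $\mathrm{LockPolicy}(\sigma)$; $\mathrm{pol}(\varepsilon)$ is undefined. **Reduction** $e,\Sigma,S\to e',S',\omega,\Sigma'$ ($\Sigma$ = open locks, $\Sigma'$ = active lock set). Congruence rules (the premise step's $S',\omega,\Sigma'$ are propagated unchanged): reduce $e$ inside $\mathsf{new}(e,\tau)$, $!e$, $e:=e'$, $l:=e$, $e\,e'$, $(\lambda x.e)\,e$, $(e,e')$, $(v,e)$, $\mathsf{fst}(e)$, $\mathsf{snd}(e)$, $\mathsf{inl}(e)$, $\mathsf{inr}(e)$, and the scrutinee of $\mathsf{case}$, all with the same open-lock set $\Sigma$. Lock rules: $\mathsf{open}\ \sigma\ \mathsf{in}\ e,\Sigma,S\to \mathsf{opened}\ \sigma\ \mathsf{in}\ e,S,\mathsf{open}(\sigma),\Sigma$; if $e,\Sigma\cup\{\sigma\},S\to e',S',\omega,\Sigma'$ then $\mathsf{opened}\ \sigma\ \mathsf{in}\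 e,\Sigma,S\to\mathsf{opened}\ \sigma\ \mathsf{in}\ e',S',\omega,\Sigma'$; $\mathsf{opened}\ \sigma\ \mathsf{in}\ v,\Sigma,S\to v,S,\mathsf{unopen}(\sigma),\Sigma$; analogously for $\mathsf{close}/\mathsf{closed}$ with $\Sigma\setminus\{\sigma\}$ and observations $\mathsf{close}(\sigma)$, $\mathsf{unclose}(\sigma)$. If $\sigma\in\Sigma$ and $e,\Sigma,S\to e'',S',\omega,\Sigma'$ then $\mathsf{when}\ \sigma\ \mathsf{then}\ e\ \mathsf{else}\ e',\Sigma,S\to\mathsf{when}\ \sigma\ \mathsf{then}\ e''\ \mathsf{else}\ e',S',\omega,\Sigma'$; if $\sigma\notin\Sigma$ and $e',\Sigma,S\to e'',S',\omega,\Sigma'$ then it steps to $\mathsf{when}\ \sigma\ \mathsf{then}\ e\ \mathsf{else}\ e''$; if $\sigma\in\Sigma$, $\mathsf{when}\ \sigma\ \mathsf{then}\ v\ \mathsf{else}\ e'\to v$; if $\sigma\notin\Sigma$, $\mathsf{when}\ \sigma\ \mathsf{then}\ e\ \mathsf{else}\ v\to v$ (both with $S$ unchanged, $\varepsilon$, active set $\Sigma$). Base rules (state unchanged unless stated, active set $\Sigma$): $!l\to v$ with $\varepsilon$ if $S(l)=v$; $\mathsf{new}(v,\tau),\Sigma,S\to l,S\cup\{l\mapsto(v,\tau)\},\mathsf{wr}_{l,\tau}(v),\Sigma$ for any $l\notin\mathrm{dom}(S)$; $l:=v,\Sigma,S\to (),S[l\mapsto(v,\tau)],\mathsf{wr}_{l,\tau}(v),\Sigma$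 if $l\in\mathrm{dom}(S)$, $\mathrm{type}(S,l)=\tau$; $(\lambda x.e)\,v\to[v/x]e$, $\mathsf{fst}(v,v')\to v$, $\mathsf{snd}(v,v')\to v'$, $\mathsf{case}\ \mathsf{inl}(v)\ldots\to[v/x]e'$, $\mathsf{case}\ \mathsf{inr}(v)\ldots\to[v/y]e''$, all with $\varepsilon$. **Unary relation** (sets of triples, defined by well-founded recursion on the step index $m$). $(S,m)\triangleright\theta$ iff $\mathrm{dom}\,\theta\subseteq\mathrm{dom}\,S$ and for all $l\in\mathrm{dom}\,\theta$: $\theta(l)=\mathrm{type}(S,l)$ and $(S(l),\theta,m)\in\mathcal{V}[\![\theta(l)]\!]$. $\mathcal{V}[\![A^p]\!]=\mathcal{V}[\![A]\!]$; $\mathcal{V}[\![\mathsf{unit}]\!]=\{((),\theta,m)\}$; $\mathcal{V}[\![\mathsf{nat}]\!]=\{(n,\theta,m)\}$; pairs/sums componentwise; $\mathcal{V}[\![\mathsf{ref}\,\tau]\!]=\{(l,\theta,m)\mid\theta(l)=\tau\}$; $(\lambda x.e,\theta,m)\in\mathcal{V}[\![\tau_1\xrightarrow{\Sigma,pc}\tau_2]\!]$ iff for all $\theta'\sqsupseteq\theta$, $m'<m$, $v$ with $(v,\theta',m')\in\mathcal{V}[\![\tau_1]\!]$: $([v/x]e,\theta',m')\in\mathcal{E}^{pc}[\![\tau_2]\!]$. $\mathcal{E}^{pc}[\![\tau]\!]=\mathcal{V}[\![\tau]\!]\cup\{(e,\theta,m)\mid e\notin\mathcal{V}$ and for all $S,\theta'\sqsupseteq\theta,m'<m,e',S',\omega,\Sigma,\Sigma'$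 with $(S,m')\triangleright\theta'$ and $e,\Sigma,S\to e',S',\omega,\Sigma'$: ($\omega=\varepsilon$ or $pc\sqsubseteq\mathrm{pol}(\omega)$) and there is $\theta''\sqsupseteq\theta'$ with $(S',m')\triangleright\theta''$ and $(e',\theta'',m')\in\mathcal{E}^{pc}[\![\tau]\!]\}$. **Attackers.** An attacker $\mathcal{A}=(a,\Sigma_{\mathcal{A}})$; $p\sqsubseteq\mathcal{A}$ iff $p\sqsubseteq\{(\Sigma_{\mathcal{A}}\Rightarrow a)\}$ (for labeled types via their label); for a lock set, $\Sigma\sqsubseteq\mathcal{A}$ iff $\Sigma\subseteq\Sigma_{\mathcal{A}}$; by convention $\mathrm{pol}(\varepsilon)\not\sqsubseteq\mathcal{A}$. $\mathrm{low}_{\mathcal{A}}(\Sigma)=\{\sigma\in\Sigma\mid\mathrm{LockPolicy}(\sigma)\sqsubseteq\mathcal{A}\}$; $\Sigma\approx_{\mathcal{A}}\Sigma'$ iff $\mathrm{low}_{\mathcal{A}}(\Sigma)=\mathrm{low}_{\mathcal{A}}(\Sigma')$. **Worlds.** $W=(\theta_1,\theta_2,\beta)$ with $\beta$ a partial bijection (injective partial function, viewed as a relation) from $\mathrm{dom}\,\theta_1$ to $\mathrm{dom}\,\theta_2$. $W'\sqsupseteq W$ iff $\theta_i\subseteq\theta_i'$ and $\beta\subseteq\beta'$. $(S_1,S_2,m)\triangleright_{\mathcal{A}}W$ iff $\mathrm{dom}\,\theta_i\subseteq\mathrm{dom}\,S_i$, $\theta_i(l)=\mathrm{type}(S_i,l)$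 for $l\in\mathrm{dom}\,\theta_i$, $\beta\subseteq\mathrm{dom}\,\theta_1\times\mathrm{dom}\,\theta_2$, and for all $(l_1,l_2)\in\beta$: $\theta_1(l_1)=\theta_2(l_2)$ and $(S_1(l_1),S_2(l_2),W,m)\in\mathcal{V}^{\mathcal{A}}[\![\theta_1(l_1)]\!]$. **Binary value relation** (well-founded recursion on $m$ and types). $\mathcal{V}^{\mathcal{A}}[\![A^p]\!]$: if $p\sqsubseteq\mathcal{A}$, the tuples $(v,v',W,m)\in\mathcal{V}^{\mathcal{A}}[\![A]\!]$; otherwise the tuples with $(v,W.\theta_1,m),(v',W.\theta_2,m)\in\mathcal{V}[\![A]\!]$ (unary). $\mathsf{unit}$: $((),(),W,m)$; $\mathsf{nat}$: $(n,n,W,m)$; pairs componentwise; sums: both $\mathsf{inl}$ with related payloads or both $\mathsf{inr}$; $\mathsf{ref}\,\tau$: $(l,l',W,m)$ with $W.\theta_1(l)=\tau=W.\theta_2(l')$, $(l,l')\in W.\beta$; $(\lambda x.e_1,\lambda x.e_2,W,m)\in\mathcal{V}^{\mathcal{A}}[\![\tau_1\xrightarrow{\Sigma,pc}\tau_2]\!]$ iff for all $W'\sqsupseteq W$, $m'<m$, $(v_1,v_2,W',m')\in\mathcal{V}^{\mathcal{A}}[\![\tau_1]\!]$, $\Sigma_1,\Sigma_2\supseteq\Sigma$: $([v_1/x]e_1,[v_2/x]e_2,W',\Sigma_1,\Sigma_2,m')\in\mathcal{E}^{\mathcal{A}}[\![\tau_2]\!]$, and $(\lambda x.e_i,W.\theta_i,m)\in\mathcal{V}[\![\tau_1\xrightarrow{\Sigma,pc}\tau_2]\!]$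 for $i=1,2$. **Observation relations.** Indistinguishability $\omega\equiv_{(W,m)}\omega'$ holds iff $\mathrm{pol}(\omega)\not\sqsubseteq\mathcal{A}$ and $\mathrm{pol}(\omega')\not\sqsubseteq\mathcal{A}$; or $\omega=\omega'$ is not a write; or $\omega=\mathsf{wr}_{l,\tau}(v)$, $\omega'=\mathsf{wr}_{l',\tau}(v')$ with $(v,v',W,m)\in\mathcal{V}^{\mathcal{A}}[\![\tau]\!]$ and $(l,l')\in W.\beta$. Irrelevance $\omega\approx^{(W,m)}\omega'$ holds iff $\omega=\omega'$ is not a write; or $\mathrm{pol}(\omega)\not\sqsubseteq\mathcal{A}$ or $\mathrm{pol}(\omega')\not\sqsubseteq\mathcal{A}$; or $\omega=\mathsf{wr}_{l,\tau}(v)$, $\omega'=\mathsf{wr}_{l',\tau}(v')$ with $(v,v',W,m)\in\mathcal{V}^{\mathcal{A}}[\![\tau]\!]$. **Binary expression relation.** $\mathcal{E}^{\mathcal{A}}[\![\tau]\!]=\{(v,v',W,\Sigma_1,\Sigma_2,m)\mid(v,v',W,m)\in\mathcal{V}^{\mathcal{A}}[\![\tau]\!]\}\cup\mathcal{E}^{\mathcal{A},\beta}[\![\tau]\!]$, where $(e_1,e_2,W,\Sigma,\Sigma',m)\in\mathcal{E}^{\mathcal{A},\beta}[\![\tau]\!]$ iff $\Sigma\approx_{\mathcal{A}}\Sigma'$ and for all $\Sigma_1\supseteq\Sigma$, $\Sigma_2\supseteq\Sigma'$ with $\Sigma_1\approx_{\mathcal{A}}\Sigma_2$, all $W'\sqsupseteq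 W$, $m'<m$, $S_1,S_2$ with $(S_1,S_2,m')\triangleright_{\mathcal{A}}W'$, at least one holds: (Par) $e_1,e_2\notin\mathcal{V}$ and for all steps $e_1,\Sigma_1,S_1\to e_1',S_1',\omega,\Sigma_1'$ and $e_2,\Sigma_2,S_2\to e_2',S_2',\omega',\Sigma_2'$: if $\omega\approx^{(W',m')}\omega'$ or $\Sigma_1'\sqsubseteq\mathcal{A}$ or $\Sigma_2'\sqsubseteq\mathcal{A}$, then there is $W''\sqsupseteq W'$ with $(S_1',S_2',m')\triangleright_{\mathcal{A}}W''$, $\omega\equiv_{(W'',m')}\omega'$ and $(e_1',e_2',W'',\Sigma,\Sigma',m')\in\mathcal{E}^{\mathcal{A}}[\![\tau]\!]$; (L) $e_1\notin\mathcal{V}$ and for every step $e_1,\Sigma_1,S_1\to e_1',S_1',\omega,\Sigma_1'$: $\mathrm{pol}(\omega)\not\sqsubseteq\mathcal{A}$ and there is $W''\sqsupseteq W'$ with $(S_1',S_2,m')\triangleright_{\mathcal{A}}W''$ and $(e_1',e_2,W'',\Sigma,\Sigma',m')\in\mathcal{E}^{\mathcal{A}}[\![\tau]\!]$; (R) symmetric to (L) with a step of $e_2$ from $\Sigma_2,S_2$, requiring $(S_1,S_2',m')\triangleright_{\mathcal{A}}W''$ and $(e_1,e_2',W'',\Sigma,\Sigma',m')\in\mathcal{E}^{\mathcal{A}}[\![\tau]\!]$. *)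

theory Defs
  imports Main
begin

text \<open>Actors have type 'a, locks have type 'l. A clause (Sigma => a) is the pair (Sigma, a).\<close>

type_synonym ('a, 'l) policy = "('l set \<times> 'a) set"

definition flows :: "('a, 'l) policy \<Rightarrow> ('a, 'l) policy \<Rightarrow> bool" where
  "flows p q \<longleftrightarrow> (\<forall>S2 a. (S2, a) \<in> q \<longrightarrow> (\<exists>S1. (S1, a) \<in> p \<and> S1 \<subseteq> S2))"

definition pbot :: "('a, 'l) policy" where
  "pbot = {({}, a) | a. True}"

definition pspec :: "('a, 'l) policy \<Rightarrow> 'l set \<Rightarrow> ('a, 'l) policy" where
  "pspec p L = {(S1 - L, a) | S1 a. (S1, a) \<in> p}"

datatype ('a, 'l) raw =
    TUnit
  | TNat
  | TSum "('a, 'l) lty" "('a, 'l) lty"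
  | TProd "('a, 'l) lty" "('a, 'l) lty"
  | TRef "('a, 'l) lty"
  | TFun "('a, 'l) lty" "'l set" "('l set \<times> 'a) set" "('a, 'l) lty"
and ('a, 'l) lty = Lab "('a, 'l) raw" "('l set \<times> 'a) set"

primrec lab :: "('a, 'l) lty \<Rightarrow> ('a, 'l) policy" where
  "lab (Lab A p) = p"

primrec restr :: "('a, 'l) lty \<Rightarrow> 'l set \<Rightarrow> ('a, 'l) lty" where
  "restr (Lab A p) L = Lab A (pspec p L)"

inductive sub_lty :: "('a, 'l) lty \<Rightarrow> ('a, 'l) lty \<Rightarrow> bool"
      and sub_raw :: "('a, 'l) raw \<Rightarrow> ('a, 'l) raw \<Rightarrow> bool" where
  sub_lab: "flows p p' \<Longrightarrow> sub_raw A B \<Longrightarrow> sub_lty (Lab A p) (Lab B p')"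
| sub_unit: "sub_raw TUnit TUnit"
| sub_nat: "sub_raw TNat TNat"
| sub_ref: "sub_raw (TRef t) (TRef t)"
| sub_prod: "sub_lty t0 t1 \<Longrightarrow> sub_lty t2 t3 \<Longrightarrow> sub_raw (TProd t0 t2) (TProd t1 t3)"
| sub_sum: "sub_lty t0 t1 \<Longrightarrow> sub_lty t2 t3 \<Longrightarrow> sub_raw (TSum t0 t2) (TSum t1 t3)"
| sub_fun: "sub_lty t0 t1 \<Longrightarrow> sub_lty t2 t3 \<Longrightarrow> flows p' p \<Longrightarrow> L \<subseteq> L' \<Longrightarrow>
            sub_raw (TFun t1 L p t2) (TFun t0 L' p' t3)"

type_synonym vname = string
type_synonym loc = nat

datatype ('a, 'l) exp =
    Var vname
  | Unit
  | Num nat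
  | Lam vname "('a, 'l) exp"
  | Pair "('a, 'l) exp" "('a, 'l) exp"
  | Fst "('a, 'l) exp"
  | Snd "('a, 'l) exp"
  | Inl "('a, 'l) exp"
  | Inr "('a, 'l) exp"
  | Case "('a, 'l) exp" vname "('a, 'l) exp" vname "('a, 'l) exp"
  | App "('a, 'l) exp" "('a, 'l) exp"
  | New "('a, 'l) exp" "('a, 'l) lty"
  | Deref "('a, 'l) exp"
  | Assign "('a, 'l) exp" "('a, 'l) exp"
  | OpenIn 'l "('a, 'l) exp"
  | Opened 'l "('a, 'l) exp"
  | CloseIn 'l "('a, 'l) exp"
  | Closed 'l "('a, 'l) exp"
  | When 'l "('a, 'l) exp" "('a, 'l) exp"
  | Loc loc

primrec is_val :: "('a, 'l) exp \<Rightarrow> bool" where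
  "is_val (Var x) = False"
| "is_val Unit = True"
| "is_val (Num n) = True"
| "is_val (Lam x e) = True"
| "is_val (Pair e1 e2) = (is_val e1 \<and> is_val e2)"
| "is_val (Fst e) = False"
| "is_val (Snd e) = False"
| "is_val (Inl e) = is_val e"
| "is_val (Inr e) = is_val e"
| "is_val (Case e x e1 y e2) = False"
| "is_val (App e1 e2) = False"
| "is_val (New e t) = False"
| "is_val (Deref e) = False"
| "is_val (Assign e1 e2) = False"
| "is_val (OpenIn s e) = False"
| "is_val (Opened s e) = False"
| "is_val (CloseIn s e) = False"
| "is_val (Closed s e) = False"
| "is_val (When s e1 e2) = False"
| "is_val (Loc l) = True"

text \<open>Substitution [v/x]e (no renaming; binders shadow).\<close>
primrec subst :: "vname \<Rightarrow> ('a, 'l) exp \<Rightarrow> ('a, 'l) exp \<Rightarrow> ('a, 'l) exp" where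
  "subst x v (Var y) = (if y = x then v else Var y)"
| "subst x v Unit = Unit"
| "subst x v (Num n) = Num n"
| "subst x v (Lam y e) = (if y = x then Lam y e else Lam y (subst x v e))"
| "subst x v (Pair e1 e2) = Pair (subst x v e1) (subst x v e2)"
| "subst x v (Fst e) = Fst (subst x v e)"
| "subst x v (Snd e) = Snd (subst x v e)"
| "subst x v (Inl e) = Inl (subst x v e)"
| "subst x v (Inr e) = Inr (subst x v e)"
| "subst x v (Case e y e1 z e2) =
     Case (subst x v e) y (if y = x then e1 else subst x v e1) z (if z = x then e2 else subst x v e2)"
| "subst x v (App e1 e2) = App (subst x v e1) (subst x v e2)"
| "subst x v (New e t) = New (subst x v e) t"
| "subst x v (Deref e) = Deref (subst x v e)"
| "subst x v (Assign e1 e2) = Assign (subst x v e1) (subst x v e2)"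
| "subst x v (OpenIn s e) = OpenIn s (subst x v e)"
| "subst x v (Opened s e) = Opened s (subst x v e)"
| "subst x v (CloseIn s e) = CloseIn s (subst x v e)"
| "subst x v (Closed s e) = Closed s (subst x v e)"
| "subst x v (When s e1 e2) = When s (subst x v e1) (subst x v e2)"
| "subst x v (Loc l) = Loc l"

type_synonym ('a, 'l) state = "loc \<rightharpoonup> (('a, 'l) exp \<times> ('a, 'l) lty)"

definition wf_state :: "('a, 'l) state \<Rightarrow> bool" where
  "wf_state S \<longleftrightarrow> finite (dom S) \<and> (\<forall>l v t. S l = Some (v, t) \<longrightarrow> is_val v)"

datatype ('a, 'l) obs =
    Eps
  | Wr loc "('a, 'l) lty" "('a, 'l) exp"
  | ObOpen 'l
  | ObClose 'l
  | ObUnopen 'l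
  | ObUnclose 'l

primrec pol :: "('l \<Rightarrow> ('a, 'l) policy) \<Rightarrow> ('a, 'l) obs \<Rightarrow> ('a, 'l) policy option" where
  "pol LP Eps = None"
| "pol LP (Wr l t v) = Some (lab t)"
| "pol LP (ObOpen s) = Some (LP s)"
| "pol LP (ObClose s) = Some (LP s)"
| "pol LP (ObUnopen s) = Some (LP s)"
| "pol LP (ObUnclose s) = Some (LP s)"

primrec is_write :: "('a, 'l) obs \<Rightarrow> bool" where
  "is_write Eps = False"
| "is_write (Wr l t v) = True"
| "is_write (ObOpen s) = False"
| "is_write (ObClose s) = False"
| "is_write (ObUnopen s) = False"
| "is_write (ObUnclose s) = False"

section \<open>Reduction  e, Sigma, S --> e', S', omega, Sigma'\<close>

inductive step :: "('a, 'l) exp \<Rightarrow> 'l set \<Rightarrow> ('a, 'l) state \<Rightarrow>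
                   ('a, 'l) exp \<Rightarrow> ('a, 'l) state \<Rightarrow> ('a, 'l) obs \<Rightarrow> 'l set \<Rightarrow> bool" where
  c_new: "step e L S e1 S' w L' \<Longrightarrow> step (New e t) L S (New e1 t) S' w L'"
| c_deref: "step e L S e1 S' w L' \<Longrightarrow> step (Deref e) L S (Deref e1) S' w L'"
| c_assign1: "step e L S e1 S' w L' \<Longrightarrow> step (Assign e e2) L S (Assign e1 e2) S' w L'"
| c_assign2: "step e L S e1 S' w L' \<Longrightarrow> step (Assign (Loc l) e) L S (Assign (Loc l) e1) S' w L'"
| c_app1: "step e L S e1 S' w L' \<Longrightarrow> step (App e e2) L S (App e1 e2) S' w L'"
| c_app2: "step e L S e1 S' w L' \<Longrightarrow> step (App (Lam x b) e) L S (App (Lam x b) e1) S' w L'"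
| c_pair1: "step e L S e1 S' w L' \<Longrightarrow> step (Pair e e2) L S (Pair e1 e2) S' w L'"
| c_pair2: "is_val v \<Longrightarrow> step e L S e1 S' w L' \<Longrightarrow> step (Pair v e) L S (Pair v e1) S' w L'"
| c_fst: "step e L S e1 S' w L' \<Longrightarrow> step (Fst e) L S (Fst e1) S' w L'"
| c_snd: "step e L S e1 S' w L' \<Longrightarrow> step (Snd e) L S (Snd e1) S' w L'"
| c_inl: "step e L S e1 S' w L' \<Longrightarrow> step (Inl e) L S (Inl e1) S' w L'"
| c_inr: "step e L S e1 S' w L' \<Longrightarrow> step (Inr e) L S (Inr e1) S' w L'"
| c_case: "step e L S e1 S' w L' \<Longrightarrow> step (Case e x a y b) L S (Case e1 x a y b) S' w L'"
| open_: "step (OpenIn s e) L S (Opened s e) S (ObOpen s) L"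
| opened_c: "step e (insert s L) S e1 S' w L' \<Longrightarrow> step (Opened s e) L S (Opened s e1) S' w L'"
| opened_v: "is_val v \<Longrightarrow> step (Opened s v) L S v S (ObUnopen s) L"
| close_: "step (CloseIn s e) L S (Closed s e) S (ObClose s) L"
| closed_c: "step e (L - {s}) S e1 S' w L' \<Longrightarrow> step (Closed s e) L S (Closed s e1) S' w L'"
| closed_v: "is_val v \<Longrightarrow> step (Closed s v) L S v S (ObUnclose s) L"
| when_t: "s \<in> L \<Longrightarrow> step e L S e1 S' w L' \<Longrightarrow> step (When s e e2) L S (When s e1 e2) S' w L'"
| when_f: "s \<notin> L \<Longrightarrow> step e2 L S e1 S' w L' \<Longrightarrow> step (When s e e2) L S (When s e e1) S' w L'"
| when_tv: "s \<in> L \<Longrightarrow> is_val v \<Longrightarrow> step (When s v e2) L S v S Eps L"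
| when_fv: "s \<notin> L \<Longrightarrow> is_val v \<Longrightarrow> step (When s e v) L S v S Eps L"
| deref: "S l = Some (v, t) \<Longrightarrow> step (Deref (Loc l)) L S v S Eps L"
| new: "is_val v \<Longrightarrow> l \<notin> dom S \<Longrightarrow> step (New v t) L S (Loc l) (S(l \<mapsto> (v, t))) (Wr l t v) L"
| assign: "is_val v \<Longrightarrow> S l = Some (u, t) \<Longrightarrow>
           step (Assign (Loc l) v) L S Unit (S(l \<mapsto> (v, t))) (Wr l t v) L"
| beta: "is_val v \<Longrightarrow> step (App (Lam x e) v) L S (subst x v e) S Eps L"
| fst_: "is_val v \<Longrightarrow> is_val v' \<Longrightarrow> step (Fst (Pair v v')) L S v S Eps L"
| snd_: "is_val v \<Longrightarrow> is_val v' \<Longrightarrow> step (Snd (Pair v v')) L S v' S Eps L"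
| case_l: "is_val v \<Longrightarrow> step (Case (Inl v) x a y b) L S (subst x v a) S Eps L"
| case_r: "is_val v \<Longrightarrow> step (Case (Inr v) x a y b) L S (subst y v b) S Eps L"

section \<open>Unary logical relation\<close>

type_synonym ('a, 'l) senv = "loc \<rightharpoonup> ('a, 'l) lty"

definition senv_ext :: "('a, 'l) senv \<Rightarrow> ('a, 'l) senv \<Rightarrow> bool" where
  "senv_ext th th' \<longleftrightarrow> th \<subseteq>\<^sub>m th' \<and> finite (dom th')"

type_synonym ('a, 'l) uVrel = "('a, 'l) lty \<Rightarrow> ('a, 'l) senv \<Rightarrow> ('a, 'l) exp \<Rightarrow> bool"
type_synonym ('a, 'l) uErel =
  "('a, 'l) policy \<Rightarrow> ('a, 'l) lty \<Rightarrow> ('a, 'l) senv \<Rightarrow> ('a, 'l) exp \<Rightarrow> bool"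

text \<open>Value relation at level m, given the relations VL k / EL k at the lower levels k < m.\<close>
primrec uV_raw :: "(nat \<Rightarrow> ('a, 'l) uVrel) \<Rightarrow> (nat \<Rightarrow> ('a, 'l) uErel) \<Rightarrow> nat \<Rightarrow>
                    ('a, 'l) raw \<Rightarrow> ('a, 'l) senv \<Rightarrow> ('a, 'l) exp \<Rightarrow> bool"
    and uV_lty :: "(nat \<Rightarrow> ('a, 'l) uVrel) \<Rightarrow> (nat \<Rightarrow> ('a, 'l) uErel) \<Rightarrow> nat \<Rightarrow>
                    ('a, 'l) lty \<Rightarrow> ('a, 'l) senv \<Rightarrow> ('a, 'l) exp \<Rightarrow> bool" where
  "uV_raw VL EL m TUnit th v = (v = Unit)"
| "uV_raw VL EL m TNat th v = (\<exists>n. v = Num n)"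
| "uV_raw VL EL m (TSum t1 t2) th v =
     ((\<exists>v1. v = Inl v1 \<and> uV_lty VL EL m t1 th v1) \<or> (\<exists>v2. v = Inr v2 \<and> uV_lty VL EL m t2 th v2))"
| "uV_raw VL EL m (TProd t1 t2) th v =
     (\<exists>v1 v2. v = Pair v1 v2 \<and> uV_lty VL EL m t1 th v1 \<and> uV_lty VL EL m t2 th v2)"
| "uV_raw VL EL m (TRef t) th v = (\<exists>l. v = Loc l \<and> th l = Some t)"
| "uV_raw VL EL m (TFun t1 L pc t2) th v =
     (\<exists>x e. v = Lam x e \<and>
        (\<forall>th' m' u. senv_ext th th' \<longrightarrow> m' < m \<longrightarrow> VL m' t1 th' u \<longrightarrow> EL m' pc t2 th' (subst x u e)))"
| "uV_lty VL EL m (Lab A p) th v = uV_raw VL EL m A th v"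

text \<open>(S, m) |> theta, where V is the value relation at level m.\<close>
definition usat :: "('a, 'l) uVrel \<Rightarrow> ('a, 'l) state \<Rightarrow> ('a, 'l) senv \<Rightarrow> bool" where
  "usat V S th \<longleftrightarrow> dom th \<subseteq> dom S \<and>
     (\<forall>l t. th l = Some t \<longrightarrow> (\<exists>v. S l = Some (v, t) \<and> V t th v))"

definition uStep :: "('l \<Rightarrow> ('a, 'l) policy) \<Rightarrow> (nat \<Rightarrow> ('a, 'l) uVrel \<times> ('a, 'l) uErel) \<Rightarrow> nat \<Rightarrow> ('a, 'l) uVrel \<times> ('a, 'l) uErel" where
  "uStep LP R m =
    (let VL = (\<lambda>k. fst (R k)); EL = (\<lambda>k. snd (R k));
         Vm = uV_lty VL EL m
     in (Vm,
         \<lambda>pc t th e. Vm t th e \<or>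
           (\<not> is_val e \<and>
            (\<forall>S th' m' e' S' w L L'. wf_state S \<longrightarrow> senv_ext th th' \<longrightarrow> m' < m \<longrightarrow>
               usat (VL m') S th' \<longrightarrow> step e L S e' S' w L' \<longrightarrow>
               (w = Eps \<or> (\<exists>p. pol LP w = Some p \<and> flows pc p)) \<and>
               (\<exists>th''. senv_ext th' th'' \<and> usat (VL m') S' th'' \<and> EL m' pc t th'' e')))))"


fun ujunk :: "nat \<Rightarrow> ('a, 'l) uVrel \<times> ('a, 'l) uErel" where
  "ujunk k = ((\<lambda>_ _ _. False), (\<lambda>_ _ _ _. False))"

function uLev :: "('l \<Rightarrow> ('a, 'l) policy) \<Rightarrow> nat \<Rightarrow> ('a, 'l) uVrel \<times> ('a, 'l) uErel" where
  "uLev LP m = uStep LP (\<lambda>k. if k < m then uLev LP k else ujunk k) m"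
  by pat_completeness auto
termination by (relation "measure (\<lambda>(LP, m). m)") auto

text \<open>The unary relations: (v, theta, m) in V[[tau]], (e, theta, m) in E^pc[[tau]], and V[[A]] for raw A.\<close>
definition uV :: "('l \<Rightarrow> ('a, 'l) policy) \<Rightarrow> ('a, 'l) lty \<Rightarrow> ('a, 'l) exp \<Rightarrow> ('a, 'l) senv \<Rightarrow> nat \<Rightarrow> bool" where
  "uV LP t v th m = fst (uLev LP m) t th v"

definition uE :: "('l \<Rightarrow> ('a, 'l) policy) \<Rightarrow> ('a, 'l) policy \<Rightarrow> ('a, 'l) lty \<Rightarrow> ('a, 'l) exp \<Rightarrow> ('a, 'l) senv \<Rightarrow> nat \<Rightarrow> bool" where
  "uE LP pc t e th m = snd (uLev LP m) pc t th e"

definition uVr :: "('l \<Rightarrow> ('a, 'l) policy) \<Rightarrow> ('a, 'l) raw \<Rightarrow> ('a, 'l) exp \<Rightarrow> ('a, 'l) senv \<Rightarrow> nat \<Rightarrow> bool" where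
  "uVr LP A v th m =
     uV_raw (\<lambda>k. fst (if k < m then uLev LP k else ujunk k))
            (\<lambda>k. snd (if k < m then uLev LP k else ujunk k)) m A th v"

section \<open>Attackers and worlds\<close>

text \<open>An attacker is a pair (a, Sigma_A).\<close>
type_synonym ('a, 'l) attacker = "'a \<times> 'l set"

definition flowsA :: "('a, 'l) attacker \<Rightarrow> ('a, 'l) policy \<Rightarrow> bool" where
  "flowsA Att p \<longleftrightarrow> flows p {(snd Att, fst Att)}"

text \<open>pol(omega) below the attacker; false for epsilon by convention.\<close>
definition flowsA_o :: "('l \<Rightarrow> ('a, 'l) policy) \<Rightarrow> ('a, 'l) attacker \<Rightarrow> ('a, 'l) obs \<Rightarrow> bool" where
  "flowsA_o LP Att w \<longleftrightarrow> (case pol LP w of None \<Rightarrow> False | Some p \<Rightarrow> flowsA Att p)"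

definition lowA :: "('l \<Rightarrow> ('a, 'l) policy) \<Rightarrow> ('a, 'l) attacker \<Rightarrow> 'l set \<Rightarrow> 'l set" where
  "lowA LP Att L = {s \<in> L. flowsA Att (LP s)}"

definition lockeq :: "('l \<Rightarrow> ('a, 'l) policy) \<Rightarrow> ('a, 'l) attacker \<Rightarrow> 'l set \<Rightarrow> 'l set \<Rightarrow> bool" where
  "lockeq LP Att L L' \<longleftrightarrow> lowA LP Att L = lowA LP Att L'"

type_synonym ('a, 'l) world = "('a, 'l) senv \<times> ('a, 'l) senv \<times> (loc \<times> loc) set"

definition th1 :: "('a, 'l) world \<Rightarrow> ('a, 'l) senv" where "th1 W = fst W"
definition th2 :: "('a, 'l) world \<Rightarrow> ('a, 'l) senv" where "th2 W = fst (snd W)"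
definition wbeta :: "('a, 'l) world \<Rightarrow> (loc \<times> loc) set" where "wbeta W = snd (snd W)"

definition is_world :: "('a, 'l) world \<Rightarrow> bool" where
  "is_world W \<longleftrightarrow> finite (dom (th1 W)) \<and> finite (dom (th2 W)) \<and>
     wbeta W \<subseteq> dom (th1 W) \<times> dom (th2 W) \<and>
     (\<forall>l l1 l2. (l, l1) \<in> wbeta W \<longrightarrow> (l, l2) \<in> wbeta W \<longrightarrow> l1 = l2) \<and>
     (\<forall>l l1 l2. (l1, l) \<in> wbeta W \<longrightarrow> (l2, l) \<in> wbeta W \<longrightarrow> l1 = l2)"

definition world_ext :: "('a, 'l) world \<Rightarrow> ('a, 'l) world \<Rightarrow> bool" where
  "world_ext W W' \<longleftrightarrow> is_world W' \<and> th1 W \<subseteq>\<^sub>m th1 W' \<and> th2 W \<subseteq>\<^sub>m th2 W' \<and> wbeta W \<subseteq> wbeta W'"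

section \<open>Binary logical relation\<close>

type_synonym ('a, 'l) bVrel = "('a, 'l) lty \<Rightarrow> ('a, 'l) world \<Rightarrow> ('a, 'l) exp \<Rightarrow> ('a, 'l) exp \<Rightarrow> bool"
type_synonym ('a, 'l) bErel = "('a, 'l) lty \<Rightarrow> ('a, 'l) world \<Rightarrow> 'l set \<Rightarrow> 'l set \<Rightarrow>
                                ('a, 'l) exp \<Rightarrow> ('a, 'l) exp \<Rightarrow> bool"

primrec bV_raw :: "('l \<Rightarrow> ('a, 'l) policy) \<Rightarrow> ('a, 'l) attacker \<Rightarrow>
                    (nat \<Rightarrow> ('a, 'l) bVrel) \<Rightarrow> (nat \<Rightarrow> ('a, 'l) bErel) \<Rightarrow> nat \<Rightarrow>
                    ('a, 'l) raw \<Rightarrow> ('a, 'l) world \<Rightarrow> ('a, 'l) exp \<Rightarrow> ('a, 'l) exp \<Rightarrow> bool"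
    and bV_lty :: "('l \<Rightarrow> ('a, 'l) policy) \<Rightarrow> ('a, 'l) attacker \<Rightarrow>
                    (nat \<Rightarrow> ('a, 'l) bVrel) \<Rightarrow> (nat \<Rightarrow> ('a, 'l) bErel) \<Rightarrow> nat \<Rightarrow>
                    ('a, 'l) lty \<Rightarrow> ('a, 'l) world \<Rightarrow> ('a, 'l) exp \<Rightarrow> ('a, 'l) exp \<Rightarrow> bool" where
  "bV_raw LP Att VL EL m TUnit W v v' = (v = Unit \<and> v' = Unit)"
| "bV_raw LP Att VL EL m TNat W v v' = (\<exists>n. v = Num n \<and> v' = Num n)"
| "bV_raw LP Att VL EL m (TSum t1 t2) W v v' =
     ((\<exists>u u'. v = Inl u \<and> v' = Inl u' \<and> bV_lty LP Att VL EL m t1 W u u') \<or>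
      (\<exists>u u'. v = Inr u \<and> v' = Inr u' \<and> bV_lty LP Att VL EL m t2 W u u'))"
| "bV_raw LP Att VL EL m (TProd t1 t2) W v v' =
     (\<exists>a b a' b'. v = Pair a b \<and> v' = Pair a' b' \<and>
        bV_lty LP Att VL EL m t1 W a a' \<and> bV_lty LP Att VL EL m t2 W b b')"
| "bV_raw LP Att VL EL m (TRef t) W v v' =
     (\<exists>l l'. v = Loc l \<and> v' = Loc l' \<and> th1 W l = Some t \<and> th2 W l' = Some t \<and> (l, l') \<in> wbeta W)"
| "bV_raw LP Att VL EL m (TFun t1 L pc t2) W v v' =
     (\<exists>x1 b1 x2 b2. v = Lam x1 b1 \<and> v' = Lam x2 b2 \<and>
        (\<forall>W' m' u1 u2 L1 L2. world_ext W W' \<longrightarrow> m' < m \<longrightarrow> VL m' t1 W' u1 u2 \<longrightarrow>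
            L \<subseteq> L1 \<longrightarrow> L \<subseteq> L2 \<longrightarrow> EL m' t2 W' L1 L2 (subst x1 u1 b1) (subst x2 u2 b2)) \<and>
        uVr LP (TFun t1 L pc t2) v (th1 W) m \<and> uVr LP (TFun t1 L pc t2) v' (th2 W) m)"
| "bV_lty LP Att VL EL m (Lab A p) W v v' =
     (if flowsA Att p then bV_raw LP Att VL EL m A W v v'
      else uVr LP A v (th1 W) m \<and> uVr LP A v' (th2 W) m)"

text \<open>(S1, S2, m) |>_A W, where V is the binary value relation at level m.\<close>
definition bsat :: "('a, 'l) bVrel \<Rightarrow> ('a, 'l) state \<Rightarrow> ('a, 'l) state \<Rightarrow> ('a, 'l) world \<Rightarrow> bool" where
  "bsat V S1 S2 W \<longleftrightarrow>
     dom (th1 W) \<subseteq> dom S1 \<and> dom (th2 W) \<subseteq> dom S2 \<and>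
     (\<forall>l t. th1 W l = Some t \<longrightarrow> (\<exists>v. S1 l = Some (v, t))) \<and>
     (\<forall>l t. th2 W l = Some t \<longrightarrow> (\<exists>v. S2 l = Some (v, t))) \<and>
     wbeta W \<subseteq> dom (th1 W) \<times> dom (th2 W) \<and>
     (\<forall>l1 l2. (l1, l2) \<in> wbeta W \<longrightarrow>
        th1 W l1 = th2 W l2 \<and>
        V (the (th1 W l1)) W (fst (the (S1 l1))) (fst (the (S2 l2))))"

definition obs_eq :: "('l \<Rightarrow> ('a, 'l) policy) \<Rightarrow> ('a, 'l) attacker \<Rightarrow> ('a, 'l) bVrel \<Rightarrow>
                      ('a, 'l) world \<Rightarrow> ('a, 'l) obs \<Rightarrow> ('a, 'l) obs \<Rightarrow> bool" where
  "obs_eq LP Att V W w w' \<longleftrightarrow>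
     (\<not> flowsA_o LP Att w \<and> \<not> flowsA_o LP Att w') \<or>
     (w = w' \<and> \<not> is_write w) \<or>
     (\<exists>l l' t v v'. w = Wr l t v \<and> w' = Wr l' t v' \<and> V t W v v' \<and> (l, l') \<in> wbeta W)"

definition obs_irr :: "('l \<Rightarrow> ('a, 'l) policy) \<Rightarrow> ('a, 'l) attacker \<Rightarrow> ('a, 'l) bVrel \<Rightarrow>
                       ('a, 'l) world \<Rightarrow> ('a, 'l) obs \<Rightarrow> ('a, 'l) obs \<Rightarrow> bool" where
  "obs_irr LP Att V W w w' \<longleftrightarrow>
     (w = w' \<and> \<not> is_write w) \<or>
     (\<not> flowsA_o LP Att w \<or> \<not> flowsA_o LP Att w') \<or>
     (\<exists>l l' t v v'. w = Wr l t v \<and> w' = Wr l' t v' \<and> V t W v v')"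

definition bStep :: "('l \<Rightarrow> ('a, 'l) policy) \<Rightarrow> ('a, 'l) attacker \<Rightarrow>
                     (nat \<Rightarrow> ('a, 'l) bVrel \<times> ('a, 'l) bErel) \<Rightarrow> nat \<Rightarrow> ('a, 'l) bVrel \<times> ('a, 'l) bErel" where
  "bStep LP Att R m =
    (let VL = (\<lambda>k. fst (R k)); EL = (\<lambda>k. snd (R k));
         Vm = bV_lty LP Att VL EL m
     in (Vm,
         \<lambda>t W L L' e1 e2. Vm t W e1 e2 \<or>
          (lockeq LP Att L L' \<and>
           (\<forall>L1 L2 W' m' S1 S2.
              L \<subseteq> L1 \<longrightarrow> L' \<subseteq> L2 \<longrightarrow> lockeq LP Att L1 L2 \<longrightarrow> world_ext W W' \<longrightarrow> m' < m \<longrightarrow>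
              wf_state S1 \<longrightarrow> wf_state S2 \<longrightarrow> bsat (VL m') S1 S2 W' \<longrightarrow>
              \<comment> \<open>(Par)\<close>
              (\<not> is_val e1 \<and> \<not> is_val e2 \<and>
               (\<forall>e1' S1' w L1' e2' S2' w' L2'.
                  step e1 L1 S1 e1' S1' w L1' \<longrightarrow> step e2 L2 S2 e2' S2' w' L2' \<longrightarrow>
                  (obs_irr LP Att (VL m') W' w w' \<or> L1' \<subseteq> snd Att \<or> L2' \<subseteq> snd Att) \<longrightarrow>
                  (\<exists>W''. world_ext W' W'' \<and> bsat (VL m') S1' S2' W'' \<and>
                         obs_eq LP Att (VL m') W'' w w' \<and> EL m' t W'' L L' e1' e2'))) \<or>
              \<comment> \<open>(L)\<close>
              (\<not> is_val e1 \<and>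
               (\<forall>e1' S1' w L1'. step e1 L1 S1 e1' S1' w L1' \<longrightarrow>
                  \<not> flowsA_o LP Att w \<and>
                  (\<exists>W''. world_ext W' W'' \<and> bsat (VL m') S1' S2 W'' \<and> EL m' t W'' L L' e1' e2))) \<or>
              \<comment> \<open>(R)\<close>
              (\<not> is_val e2 \<and>
               (\<forall>e2' S2' w L2'. step e2 L2 S2 e2' S2' w L2' \<longrightarrow>
                  \<not> flowsA_o LP Att w \<and>
                  (\<exists>W''. world_ext W' W'' \<and> bsat (VL m') S1 S2' W'' \<and> EL m' t W'' L L' e1 e2')))))))"

fun bjunk :: "nat \<Rightarrow> ('a, 'l) bVrel \<times> ('a, 'l) bErel" where
  "bjunk k = ((\<lambda>_ _ _ _. False), (\<lambda>_ _ _ _ _ _. False))"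

function bLev :: "('l \<Rightarrow> ('a, 'l) policy) \<Rightarrow> ('a, 'l) attacker \<Rightarrow> nat \<Rightarrow> ('a, 'l) bVrel \<times> ('a, 'l) bErel" where
  "bLev LP Att m = bStep LP Att (\<lambda>k. if k < m then bLev LP Att k else bjunk k) m"
  by pat_completeness auto
termination by (relation "measure (\<lambda>(LP, Att, m). m)") auto

text \<open>(v, v', W, m) in V^A[[tau]] and (e, e', W, Sigma, Sigma', m) in E^A[[tau]].\<close>
definition bV :: "('l \<Rightarrow> ('a, 'l) policy) \<Rightarrow> ('a, 'l) attacker \<Rightarrow> ('a, 'l) lty \<Rightarrow>
                  ('a, 'l) exp \<Rightarrow> ('a, 'l) exp \<Rightarrow> ('a, 'l) world \<Rightarrow> nat \<Rightarrow> bool" where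
  "bV LP Att t v v' W m = fst (bLev LP Att m) t W v v'"

definition bE :: "('l \<Rightarrow> ('a, 'l) policy) \<Rightarrow> ('a, 'l) attacker \<Rightarrow> ('a, 'l) lty \<Rightarrow>
                  ('a, 'l) exp \<Rightarrow> ('a, 'l) exp \<Rightarrow> ('a, 'l) world \<Rightarrow> 'l set \<Rightarrow> 'l set \<Rightarrow> nat \<Rightarrow> bool" where
  "bE LP Att t e e' W L L' m = snd (bLev LP Att m) t W L L' e e'"

end

theory Submission imports Defs begin

declare uLev.simps[simp del] bLev.simps[simp del]

abbreviation UVL where "UVL LP m \<equiv> (\<lambda>k. fst (if k < m then uLev LP k else ujunk k))"
abbreviation UEL where "UEL LP m \<equiv> (\<lambda>k. snd (if k < m then uLev LP k else ujunk k))"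
abbreviation BVL where "BVL LP Att m \<equiv> (\<lambda>k. fst (if k < m then bLev LP Att k else bjunk k))"
abbreviation BEL where "BEL LP Att m \<equiv> (\<lambda>k. snd (if k < m then bLev LP Att k else bjunk k))"

lemma uLev_unf: "uLev LP m = uStep LP (\<lambda>k. if k < m then uLev LP k else ujunk k) m"
  by (rule uLev.simps)
lemma bLev_unf: "bLev LP Att m = bStep LP Att (\<lambda>k. if k < m then bLev LP Att k else bjunk k) m"
  by (rule bLev.simps)

lemma uV_unf: "uV LP t v th m = uV_lty (UVL LP m) (UEL LP m) m t th v"
  unfolding uV_def by (subst uLev_unf) (simp add: uStep_def Let_def)

lemma uV_Lab: "uV LP (Lab A p) v th m = uVr LP A v th m"
  by (simp add: uV_unf uVr_def)

lemma uE_unf: "uE LP pc t e th m = (uV LP t e th m \<or> (\<not> is_val e \<and>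
   (\<forall>S th' m' e' S' w L L'. wf_state S \<longrightarrow> senv_ext th th' \<longrightarrow> m' < m \<longrightarrow>
      usat (\<lambda>t th v. uV LP t v th m') S th' \<longrightarrow> step e L S e' S' w L' \<longrightarrow>
      (w = Eps \<or> (\<exists>p. pol LP w = Some p \<and> flows pc p)) \<and>
      (\<exists>th''. senv_ext th' th'' \<and> usat (\<lambda>t th v. uV LP t v th m') S' th'' \<and> uE LP pc t e' th'' m'))))"
proof -
  have A: "\<And>m'. m' < m \<Longrightarrow> fst (if m' < m then uLev LP m' else ujunk m') = (\<lambda>t th v. uV LP t v th m')"
    by (auto simp: uV_def fun_eq_iff)
  have B: "\<And>m'. m' < m \<Longrightarrow> snd (if m' < m then uLev LP m' else ujunk m') = (\<lambda>pc t th e. uE LP pc t e th m')"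
    by (auto simp: uE_def fun_eq_iff)
  show ?thesis
    apply (subst uE_def, subst uLev_unf)
    apply (simp add: uStep_def Let_def uV_unf[symmetric] uV_def uE_def cong: imp_cong)
    done
qed

lemma uVr_fun: "uVr LP (TFun t1 L pc t2) v th m = (\<exists>x e. v = Lam x e \<and>
        (\<forall>th' m' u. senv_ext th th' \<longrightarrow> m' < m \<longrightarrow> uV LP t1 u th' m' \<longrightarrow> uE LP pc t2 (subst x u e) th' m'))"
  by (auto simp: uVr_def uV_def uE_def)

lemma bV_unf: "bV LP Att t v v' W m = bV_lty LP Att (BVL LP Att m) (BEL LP Att m) m t W v v'"
  unfolding bV_def by (subst bLev_unf) (simp add: bStep_def Let_def)

lemma bVr_fun: "bV_raw LP Att (BVL LP Att m) (BEL LP Att m) m (TFun t1 L pc t2) W v v' =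
     (\<exists>x1 b1 x2 b2. v = Lam x1 b1 \<and> v' = Lam x2 b2 \<and>
        (\<forall>W' m' u1 u2 L1 L2. world_ext W W' \<longrightarrow> m' < m \<longrightarrow> bV LP Att t1 u1 u2 W' m' \<longrightarrow>
            L \<subseteq> L1 \<longrightarrow> L \<subseteq> L2 \<longrightarrow> bE LP Att t2 (subst x1 u1 b1) (subst x2 u2 b2) W' L1 L2 m') \<and>
        uVr LP (TFun t1 L pc t2) v (th1 W) m \<and> uVr LP (TFun t1 L pc t2) v' (th2 W) m)"
  by (auto simp: bV_def bE_def)

lemma bE_unf: "bE LP Att t e1 e2 W L L' m = (bV LP Att t e1 e2 W m \<or>
          (lockeq LP Att L L' \<and>
           (\<forall>L1 L2 W' m' S1 S2.
              L \<subseteq> L1 \<longrightarrow> L' \<subseteq> L2 \<longrightarrow> lockeq LP Att L1 L2 \<longrightarrow> world_ext W W' \<longrightarrow> m' < m \<longrightarrow>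
              wf_state S1 \<longrightarrow> wf_state S2 \<longrightarrow> bsat (\<lambda>t W v v'. bV LP Att t v v' W m') S1 S2 W' \<longrightarrow>
              (\<not> is_val e1 \<and> \<not> is_val e2 \<and>
               (\<forall>e1' S1' w L1' e2' S2' w' L2'.
                  step e1 L1 S1 e1' S1' w L1' \<longrightarrow> step e2 L2 S2 e2' S2' w' L2' \<longrightarrow>
                  (obs_irr LP Att (\<lambda>t W v v'. bV LP Att t v v' W m') W' w w' \<or> L1' \<subseteq> snd Att \<or> L2' \<subseteq> snd Att) \<longrightarrow>
                  (\<exists>W''. world_ext W' W'' \<and> bsat (\<lambda>t W v v'. bV LP Att t v v' W m') S1' S2' W'' \<and>
                         obs_eq LP Att (\<lambda>t W v v'. bV LP Att t v v' W m') W'' w w' \<and> bE LP Att t e1' e2' W'' L L' m'))) \<or>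
              (\<not> is_val e1 \<and>
               (\<forall>e1' S1' w L1'. step e1 L1 S1 e1' S1' w L1' \<longrightarrow>
                  \<not> flowsA_o LP Att w \<and>
                  (\<exists>W''. world_ext W' W'' \<and> bsat (\<lambda>t W v v'. bV LP Att t v v' W m') S1' S2 W'' \<and> bE LP Att t e1' e2 W'' L L' m'))) \<or>
              (\<not> is_val e2 \<and>
               (\<forall>e2' S2' w L2'. step e2 L2 S2 e2' S2' w L2' \<longrightarrow>
                  \<not> flowsA_o LP Att w \<and>
                  (\<exists>W''. world_ext W' W'' \<and> bsat (\<lambda>t W v v'. bV LP Att t v v' W m') S1 S2' W'' \<and> bE LP Att t e1 e2' W'' L L' m'))))))"
proof -
  have A: "\<And>m'. m' < m \<Longrightarrow> fst (if m' < m then bLev LP Att m' else bjunk m') = (\<lambda>t W v v'. bV LP Att t v v' W m')"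
    by (auto simp: bV_def fun_eq_iff)
  have B: "\<And>m'. m' < m \<Longrightarrow> snd (if m' < m then bLev LP Att m' else bjunk m') = (\<lambda>t W L L' e e'. bE LP Att t e e' W L L' m')"
    by (auto simp: bE_def fun_eq_iff)
  show ?thesis
    apply (subst bE_def, subst bLev_unf)
    apply (simp add: bStep_def Let_def bV_unf[symmetric] bV_def bE_def cong: imp_cong)
    done
qed

definition bVr where "bVr LP Att A v v' W m = bV_raw LP Att (BVL LP Att m) (BEL LP Att m) m A W v v'"

lemma uVr_simps:
  "uVr LP TUnit v th m = (v = Unit)"
  "uVr LP TNat v th m = (\<exists>n. v = Num n)"
  "uVr LP (TSum t1 t2) v th m = ((\<exists>v1. v = Inl v1 \<and> uV LP t1 v1 th m) \<or> (\<exists>v2. v = Inr v2 \<and> uV LP t2 v2 th m))"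
  "uVr LP (TProd t1 t2) v th m = (\<exists>v1 v2. v = Pair v1 v2 \<and> uV LP t1 v1 th m \<and> uV LP t2 v2 th m)"
  "uVr LP (TRef t) v th m = (\<exists>l. v = Loc l \<and> th l = Some t)"
  by (simp_all add: uVr_def uV_unf)

lemma bV_Lab: "bV LP Att (Lab A p) v v' W m = (if flowsA Att p then bVr LP Att A v v' W m
      else uVr LP A v (th1 W) m \<and> uVr LP A v' (th2 W) m)"
  by (simp add: bV_unf bVr_def)

lemma bVr_simps:
  "bVr LP Att TUnit v v' W m = (v = Unit \<and> v' = Unit)"
  "bVr LP Att TNat v v' W m = (\<exists>n. v = Num n \<and> v' = Num n)"
  "bVr LP Att (TSum t1 t2) v v' W m =
     ((\<exists>u u'. v = Inl u \<and> v' = Inl u' \<and> bV LP Att t1 u u' W m) \<or>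
      (\<exists>u u'. v = Inr u \<and> v' = Inr u' \<and> bV LP Att t2 u u' W m))"
  "bVr LP Att (TProd t1 t2) v v' W m =
     (\<exists>a b a' b'. v = Pair a b \<and> v' = Pair a' b' \<and> bV LP Att t1 a a' W m \<and> bV LP Att t2 b b' W m)"
  "bVr LP Att (TRef t) v v' W m =
     (\<exists>l l'. v = Loc l \<and> v' = Loc l' \<and> th1 W l = Some t \<and> th2 W l' = Some t \<and> (l, l') \<in> wbeta W)"
  "bVr LP Att (TFun t1 L pc t2) v v' W m =
     (\<exists>x1 b1 x2 b2. v = Lam x1 b1 \<and> v' = Lam x2 b2 \<and>
        (\<forall>W' m' u1 u2 L1 L2. world_ext W W' \<longrightarrow> m' < m \<longrightarrow> bV LP Att t1 u1 u2 W' m' \<longrightarrow>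
            L \<subseteq> L1 \<longrightarrow> L \<subseteq> L2 \<longrightarrow> bE LP Att t2 (subst x1 u1 b1) (subst x2 u2 b2) W' L1 L2 m') \<and>
        uVr LP (TFun t1 L pc t2) v (th1 W) m \<and> uVr LP (TFun t1 L pc t2) v' (th2 W) m)"
  by (simp_all only: bVr_def bVr_fun) (simp_all add: bV_unf)

lemma flows_trans: "flows p q \<Longrightarrow> flows q r \<Longrightarrow> flows p r"
  unfolding flows_def by (meson order_trans)

lemma flowsA_trans: "flows p q \<Longrightarrow> flowsA Att q \<Longrightarrow> flowsA Att p"
  unfolding flowsA_def by (rule flows_trans)

lemma flowsA_pspec: "flowsA Att (pspec p L) \<Longrightarrow> L \<subseteq> snd Att \<Longrightarrow> flowsA Att p"
  unfolding flowsA_def flows_def pspec_def by fastforce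

lemma step_not_val: "step e L S e' S' w L' \<Longrightarrow> \<not> is_val e"
  by (induction rule: step.induct) auto

lemma step_New: "step (New e t) L S e1 S' w L' \<Longrightarrow>
   (\<exists>e2. step e L S e2 S' w L' \<and> e1 = New e2 t) \<or>
   (is_val e \<and> (\<exists>l. l \<notin> dom S \<and> e1 = Loc l \<and> S' = S(l \<mapsto> (e, t)) \<and> w = Wr l t e \<and> L' = L))"
  by (erule step.cases) auto

lemma map_le_Some: "th \<subseteq>\<^sub>m th' \<Longrightarrow> th l = Some x \<Longrightarrow> th' l = Some x"
  by (metis domI map_le_def)

lemma senv_ext_trans: "senv_ext a b \<Longrightarrow> senv_ext b c \<Longrightarrow> senv_ext a c"
  unfolding senv_ext_def using map_le_trans by blast

lemma world_ext_trans: "world_ext a b \<Longrightarrow> world_ext b c \<Longrightarrow> world_ext a c"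
  unfolding world_ext_def using map_le_trans by blast

lemma world_ext_senv1: "world_ext W W' \<Longrightarrow> senv_ext (th1 W) (th1 W')"
  unfolding world_ext_def senv_ext_def is_world_def by blast
lemma world_ext_senv2: "world_ext W W' \<Longrightarrow> senv_ext (th2 W) (th2 W')"
  unfolding world_ext_def senv_ext_def is_world_def by blast

lemma uMono: "\<forall>v th th' k. uVr LP A v th m \<longrightarrow> senv_ext th th' \<longrightarrow> k \<le> m \<longrightarrow> uVr LP A v th' k"
  "\<forall>v th th' k. uV LP t v th m \<longrightarrow> senv_ext th th' \<longrightarrow> k \<le> m \<longrightarrow> uV LP t v th' k"
proof (induct A and t)
  case (TFun x1 x2 x3 x4)
  show ?case
  proof (intro allI impI)
    fix v th th' k assume h: "uVr LP (TFun x1 x2 x3 x4) v th m" "senv_ext th th'" "k \<le> m"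
    then obtain x e where v: "v = Lam x e" and H: "\<forall>th' m' u. senv_ext th th' \<longrightarrow> m' < m \<longrightarrow> uV LP x1 u th' m' \<longrightarrow> uE LP x3 x4 (subst x u e) th' m'"
      by (auto simp only: uVr_fun)
    show "uVr LP (TFun x1 x2 x3 x4) v th' k"
      unfolding uVr_fun
    proof (intro exI conjI allI impI)
      show "v = Lam x e" by fact
      fix th'' m' u assume a: "senv_ext th' th''" "m' < k" "uV LP x1 u th'' m'"
      have "senv_ext th th''" using senv_ext_trans h(2) a(1) by blast
      moreover have "m' < m" using a(2) h(3) by simp
      ultimately show "uE LP x3 x4 (subst x u e) th'' m'" using H a(3) by blast
    qed
  qed
next
  case (TRef x)
  then show ?case by (auto simp: uVr_simps senv_ext_def intro: map_le_Some)
qed (auto simp: uVr_simps uV_Lab)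

lemma BU: "\<forall>v v' W. bVr LP Att A v v' W m \<longrightarrow> uVr LP A v (th1 W) m \<and> uVr LP A v' (th2 W) m"
  "\<forall>v v' W. bV LP Att t v v' W m \<longrightarrow> uV LP t v (th1 W) m \<and> uV LP t v' (th2 W) m"
proof (induct A and t)
  case (TFun x1 x2 x3 x4)
  then show ?case by (simp only: bVr_simps) blast
next
  case (Lab x1 x2)
  then show ?case by (auto simp: bV_Lab uV_Lab)
qed (auto simp: uVr_simps bVr_simps)

lemma bMono: "\<forall>v v' W W' k. bVr LP Att A v v' W m \<longrightarrow> world_ext W W' \<longrightarrow> k \<le> m \<longrightarrow> bVr LP Att A v v' W' k"
  "\<forall>v v' W W' k. bV LP Att t v v' W m \<longrightarrow> world_ext W W' \<longrightarrow> k \<le> m \<longrightarrow> bV LP Att t v v' W' k"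
proof (induct A and t)
  case (TFun x1 x2 x3 x4)
  show ?case
  proof (intro allI impI)
    fix v v' W W' k assume h: "bVr LP Att (TFun x1 x2 x3 x4) v v' W m" "world_ext W W'" "k \<le> m"
    then obtain y1 b1 y2 b2 where v: "v = Lam y1 b1" "v' = Lam y2 b2" and
        H: "\<forall>W' m' u1 u2 L1 L2. world_ext W W' \<longrightarrow> m' < m \<longrightarrow> bV LP Att x1 u1 u2 W' m' \<longrightarrow>
            x2 \<subseteq> L1 \<longrightarrow> x2 \<subseteq> L2 \<longrightarrow> bE LP Att x4 (subst y1 u1 b1) (subst y2 u2 b2) W' L1 L2 m'"
        and u: "uVr LP (TFun x1 x2 x3 x4) v (th1 W) m" "uVr LP (TFun x1 x2 x3 x4) v' (th2 W) m"
      by (auto simp only: bVr_simps)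
    show "bVr LP Att (TFun x1 x2 x3 x4) v v' W' k"
      unfolding bVr_simps
    proof (intro exI conjI allI impI)
      show "v = Lam y1 b1" "v' = Lam y2 b2" by fact+
      show "uVr LP (TFun x1 x2 x3 x4) v (th1 W') k" "uVr LP (TFun x1 x2 x3 x4) v' (th2 W') k"
        using u uMono(1) world_ext_senv1[OF h(2)] world_ext_senv2[OF h(2)] h(3) by blast+
      fix W'' m' u1 u2 L1 L2 assume a: "world_ext W' W''" "m' < k" "bV LP Att x1 u1 u2 W'' m'" "x2 \<subseteq> L1" "x2 \<subseteq> L2"
      have "world_ext W W''" using world_ext_trans h(2) a(1) by blast
      moreover have "m' < m" using a(2) h(3) by simp
      ultimately show "bE LP Att x4 (subst y1 u1 b1) (subst y2 u2 b2) W'' L1 L2 m'" using H a by blast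
    qed
  qed
next
  case (TRef x)
  then show ?case by (auto simp: bVr_simps world_ext_def intro: map_le_Some)
next
  case (Lab x1 x2)
  show ?case
  proof (intro allI impI)
    fix v v' W W' k assume h: "bV LP Att (Lab x1 x2) v v' W m" "world_ext W W'" "k \<le> m"
    show "bV LP Att (Lab x1 x2) v v' W' k"
    proof (cases "flowsA Att x2")
      case True
      have "bVr LP Att x1 v v' W m" using h True by (simp add: bV_Lab)
      then have "bVr LP Att x1 v v' W' k" using Lab h by blast
      then show ?thesis using True by (simp add: bV_Lab)
    next
      case False
      have "uVr LP x1 v (th1 W) m \<and> uVr LP x1 v' (th2 W) m" using h False by (simp add: bV_Lab)
      then have "uVr LP x1 v (th1 W') k \<and> uVr LP x1 v' (th2 W') k"
        using uMono(1) world_ext_senv1[OF h(2)] world_ext_senv2[OF h(2)] h(3) by blast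
      then show ?thesis using False by (simp add: bV_Lab)
    qed
  qed
qed (auto simp: bVr_simps)


lemma U: "(\<forall>A1 A2. sub_raw A1 A2 \<longrightarrow> (\<forall>v th. uVr LP A1 v th m \<longrightarrow> uVr LP A2 v th m)) \<and>
          (\<forall>t1 t2. sub_lty t1 t2 \<longrightarrow> (\<forall>v th. uV LP t1 v th m \<longrightarrow> uV LP t2 v th m)) \<and>
          (\<forall>pc pc' t t2 e th. uE LP pc t e th m \<longrightarrow> sub_lty t t2 \<longrightarrow> flows pc' pc \<longrightarrow> uE LP pc' t2 e th m)"
proof (induction m rule: less_induct)
  case (less m)
  have S: "sub_lty t1 t2 \<Longrightarrow> (\<forall>v th. uV LP t1 v th m \<longrightarrow> uV LP t2 v th m)"
          "sub_raw A1 A2 \<Longrightarrow> (\<forall>v th. uVr LP A1 v th m \<longrightarrow> uVr LP A2 v th m)" for t1 t2 A1 A2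
  proof (induct rule: sub_lty_sub_raw.inducts)
    case (sub_lab p p' A B)
    then show ?case by (simp add: uV_Lab)
  next
    case (sub_fun t0 t1 t2 t3 p' p L L')
    show ?case
    proof (intro allI impI)
      fix v th assume "uVr LP (TFun t1 L p t2) v th m"
      then obtain x e where v: "v = Lam x e" and H: "\<forall>th' m' u. senv_ext th th' \<longrightarrow> m' < m \<longrightarrow> uV LP t1 u th' m' \<longrightarrow> uE LP p t2 (subst x u e) th' m'"
        by (auto simp: uVr_fun)
      show "uVr LP (TFun t0 L' p' t3) v th m"
        unfolding uVr_fun
      proof (intro exI conjI allI impI)
        show "v = Lam x e" by fact
        fix th' m' u assume a: "senv_ext th th'" "m' < m" "uV LP t0 u th' m'"
        have "uV LP t1 u th' m'" using less.IH[OF a(2)] sub_fun(1) a(3) by blast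
        then have "uE LP p t2 (subst x u e) th' m'" using H a by blast
        then show "uE LP p' t3 (subst x u e) th' m'" using less.IH[OF a(2)] sub_fun by blast
      qed
    qed
  qed (auto simp: uVr_simps)
  have E: "uE LP pc' t2 e th m" if h: "uE LP pc t e th m" "sub_lty t t2" "flows pc' pc" for pc pc' t t2 e th
  proof -
    have "uV LP t e th m \<or> (\<not> is_val e \<and>
   (\<forall>S th' m' e' S' w L L'. wf_state S \<longrightarrow> senv_ext th th' \<longrightarrow> m' < m \<longrightarrow>
      usat (\<lambda>t th v. uV LP t v th m') S th' \<longrightarrow> step e L S e' S' w L' \<longrightarrow>
      (w = Eps \<or> (\<exists>p. pol LP w = Some p \<and> flows pc p)) \<and>
      (\<exists>th''. senv_ext th' th'' \<and> usat (\<lambda>t th v. uV LP t v th m') S' th'' \<and> uE LP pc t e' th'' m')))"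
      using h(1) by (subst (asm) uE_unf)
    then show ?thesis
    proof
      assume "uV LP t e th m" then show ?thesis using S(1)[OF h(2)] by (subst uE_unf) blast
    next
      assume H: "\<not> is_val e \<and>
   (\<forall>S th' m' e' S' w L L'. wf_state S \<longrightarrow> senv_ext th th' \<longrightarrow> m' < m \<longrightarrow>
      usat (\<lambda>t th v. uV LP t v th m') S th' \<longrightarrow> step e L S e' S' w L' \<longrightarrow>
      (w = Eps \<or> (\<exists>p. pol LP w = Some p \<and> flows pc p)) \<and>
      (\<exists>th''. senv_ext th' th'' \<and> usat (\<lambda>t th v. uV LP t v th m') S' th'' \<and> uE LP pc t e' th'' m'))"
      show ?thesis
      proof (subst uE_unf, rule disjI2, intro conjI allI impI)
        show "\<not> is_val e" using H by blast
        fix S th' m' e' S' w L L'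
        assume a: "wf_state S" "senv_ext th th'" "m' < m" "usat (\<lambda>t th v. uV LP t v th m') S th'" "step e L S e' S' w L'"
        from H a have 1: "w = Eps \<or> (\<exists>p. pol LP w = Some p \<and> flows pc p)" by blast
        then show "w = Eps \<or> (\<exists>p. pol LP w = Some p \<and> flows pc' p)" using h(3) flows_trans by blast
        from H a obtain th'' where "senv_ext th' th''" "usat (\<lambda>t th v. uV LP t v th m') S' th''" "uE LP pc t e' th'' m'"
          by blast
        then show "\<exists>th''. senv_ext th' th'' \<and> usat (\<lambda>t th v. uV LP t v th m') S' th'' \<and> uE LP pc' t2 e' th'' m'"
          using less.IH[OF a(3)] h by blast
      qed
    qed
  qed
  show ?case using S E by blast
qed


lemma bE_mono_body:
  assumes "bE LP Att t e1 e2 W L L' m"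
    and "\<And>W'' m' a b. m' < m \<Longrightarrow> bE LP Att t a b W'' L L' m' \<Longrightarrow> bE LP Att t2 a b W'' L L' m'"
    and "bV LP Att t e1 e2 W m \<Longrightarrow> bV LP Att t2 e1 e2 W m"
  shows "bE LP Att t2 e1 e2 W L L' m"
  using assms(1)
  apply (subst (asm) bE_unf, subst bE_unf)
  apply (erule disjE)
   apply (rule disjI1, erule assms(3))
  apply (rule disjI2)
  apply (elim conjE, intro conjI allI impI, assumption)
  subgoal for L1 L2 W' m' S1 S2
    apply (drule spec[of _ L1], drule spec[of _ L2], drule spec[of _ W'], drule spec[of _ m'], drule spec[of _ S1], drule spec[of _ S2])
    apply (drule mp, assumption)+
    apply (elim disjE)
      apply (rule disjI1)
      apply (elim conjE, intro conjI allI impI, assumption, assumption)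
      apply (blast intro: assms(2))
     apply (rule disjI2, rule disjI1)
     apply (elim conjE, intro conjI allI impI, assumption)
      apply blast
     apply (blast intro: assms(2))
    apply (rule disjI2, rule disjI2)
    apply (elim conjE, intro conjI allI impI, assumption)
     apply blast
    apply (blast intro: assms(2))
    done
  done

lemma B: "(\<forall>A1 A2. sub_raw A1 A2 \<longrightarrow> (\<forall>v v' W. bVr LP Att A1 v v' W m \<longrightarrow> bVr LP Att A2 v v' W m)) \<and>
          (\<forall>t1 t2. sub_lty t1 t2 \<longrightarrow> (\<forall>v v' W. bV LP Att t1 v v' W m \<longrightarrow> bV LP Att t2 v v' W m)) \<and>
          (\<forall>t t2 e e' W L L'. bE LP Att t e e' W L L' m \<longrightarrow> sub_lty t t2 \<longrightarrow> bE LP Att t2 e e' W L L' m)"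
proof (induction m rule: less_induct)
  case (less m)
  have S: "sub_lty t1 t2 \<Longrightarrow> (\<forall>v v' W. bV LP Att t1 v v' W m \<longrightarrow> bV LP Att t2 v v' W m)"
          "sub_raw A1 A2 \<Longrightarrow> (\<forall>v v' W. bVr LP Att A1 v v' W m \<longrightarrow> bVr LP Att A2 v v' W m)" for t1 t2 A1 A2
  proof (induct rule: sub_lty_sub_raw.inducts)
    case (sub_lab p p' A B)
    show ?case
    proof (intro allI impI)
      fix v v' W assume h: "bV LP Att (Lab A p) v v' W m"
      show "bV LP Att (Lab B p') v v' W m"
      proof (cases "flowsA Att p'")
        case True
        then have "flowsA Att p" using flowsA_trans sub_lab(1) by blast
        have "bVr LP Att A v v' W m" using h \<open>flowsA Att p\<close> by (simp add: bV_Lab)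
        then have "bVr LP Att B v v' W m" using sub_lab(3) by blast
        then show ?thesis using True by (simp add: bV_Lab)
      next
        case False
        have "uVr LP A v (th1 W) m \<and> uVr LP A v' (th2 W) m"
        proof (cases "flowsA Att p")
          case True
          then have "bVr LP Att A v v' W m" using h by (simp add: bV_Lab)
          then show ?thesis using BU(1)[of LP Att A m] by blast
        next
          case False
          then show ?thesis using h by (simp add: bV_Lab)
        qed
        then show ?thesis using False U[of LP m] sub_lab(2) by (simp add: bV_Lab)
      qed
    qed
  next
    case (sub_fun t0 t1 t2 t3 p' p L L')
    have sr: "sub_raw (TFun t1 L p t2) (TFun t0 L' p' t3)"
      using sub_fun by (blast intro: sub_lty_sub_raw.sub_fun)
    show ?case
    proof (intro allI impI)
      fix v v' W assume h: "bVr LP Att (TFun t1 L p t2) v v' W m"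
      then obtain x1 b1 x2 b2 where v: "v = Lam x1 b1" "v' = Lam x2 b2" and
        H: "\<forall>W' m' u1 u2 L1 L2. world_ext W W' \<longrightarrow> m' < m \<longrightarrow> bV LP Att t1 u1 u2 W' m' \<longrightarrow>
            L \<subseteq> L1 \<longrightarrow> L \<subseteq> L2 \<longrightarrow> bE LP Att t2 (subst x1 u1 b1) (subst x2 u2 b2) W' L1 L2 m'"
        and u: "uVr LP (TFun t1 L p t2) v (th1 W) m" "uVr LP (TFun t1 L p t2) v' (th2 W) m"
        by (auto simp only: bVr_simps)
      show "bVr LP Att (TFun t0 L' p' t3) v v' W m"
        unfolding bVr_simps
      proof (intro exI conjI allI impI)
        show "v = Lam x1 b1" "v' = Lam x2 b2" by fact+
        show "uVr LP (TFun t0 L' p' t3) v (th1 W) m" "uVr LP (TFun t0 L' p' t3) v' (th2 W) m"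
          using u U[of LP m] sr by blast+
        fix W' m' u1 u2 L1 L2 assume a: "world_ext W W'" "m' < m" "bV LP Att t0 u1 u2 W' m'" "L' \<subseteq> L1" "L' \<subseteq> L2"
        have "bV LP Att t1 u1 u2 W' m'" using less.IH[OF a(2)] sub_fun(1) a(3) by blast
        then have "bE LP Att t2 (subst x1 u1 b1) (subst x2 u2 b2) W' L1 L2 m'" using H a sub_fun(6) by blast
        then show "bE LP Att t3 (subst x1 u1 b1) (subst x2 u2 b2) W' L1 L2 m'" using less.IH[OF a(2)] sub_fun by blast
      qed
    qed
  qed (auto simp: bVr_simps)
  have E: "bE LP Att t2 e e' W L L' m" if h: "bE LP Att t e e' W L L' m" "sub_lty t t2" for t t2 e e' W L L'
    using h(1) apply (rule bE_mono_body)
    using less.IH h(2) S(1)[OF h(2)] by blast+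
  show ?case using S E by blast
qed


lemma uVal: "\<forall>v th. uVr LP A v th m \<longrightarrow> is_val v"
  "\<forall>v th. uV LP t v th m \<longrightarrow> is_val v"
proof (induct A and t)
  case (TFun x1 x2 x3 x4)
  then show ?case by (auto simp: uVr_fun)
qed (fastforce simp: uVr_simps uV_Lab)+


lemma bVal: "bV LP Att t v v' W m \<Longrightarrow> is_val v \<and> is_val v'"
  using BU(2)[of LP Att t m] uVal(2)[of LP t m] by blast

lemma lemX:
  assumes "bV LP Att t' v v' W k" "sub_lty (restr t' L) t" "flowsA Att (lab t) \<Longrightarrow> L \<subseteq> snd Att"
  shows "bV LP Att t v v' W k"
proof -
  obtain A' p' where t': "t' = Lab A' p'" by (cases t')
  have "sub_lty (Lab A' (pspec p' L)) t" using assms(2) t' by simp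
  then obtain B q where t: "t = Lab B q" and f: "flows (pspec p' L) q" and sr: "sub_raw A' B"
    by (cases rule: sub_lty.cases) auto
  show ?thesis
  proof (cases "flowsA Att q")
    case True
    then have "flowsA Att p'" using flowsA_pspec flowsA_trans f assms(3) t by fastforce
    then have "bVr LP Att A' v v' W k" using assms(1) t' by (simp add: bV_Lab)
    then have "bVr LP Att B v v' W k" using sr B[of LP Att k] by blast
    then show ?thesis using True t by (simp add: bV_Lab)
  next
    case False
    have "uVr LP A' v (th1 W) k \<and> uVr LP A' v' (th2 W) k"
    proof (cases "flowsA Att p'")
      case True
      then have "bVr LP Att A' v v' W k" using assms(1) t' by (simp add: bV_Lab)
      then show ?thesis using BU(1)[of LP Att A' k] by blast
    next
      case False
      then show ?thesis using assms(1) t' by (simp add: bV_Lab)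
    qed
    then show ?thesis using False t sr U[of LP k] by (simp add: bV_Lab)
  qed
qed

lemma flowsA_pbot: "flowsA Att pbot"
  unfolding flowsA_def flows_def pbot_def by auto

lemma bsat_extend:
  assumes bs: "bsat (\<lambda>t W v v'. bV LP Att t v v' W k) S1 S2 W'" and w: "is_world W'"
    and l: "l \<notin> dom S1" and l': "l' \<notin> dom S2" and vv: "bV LP Att t v v' W' k"
    and W'': "W'' = ((th1 W')(l \<mapsto> t), (th2 W')(l' \<mapsto> t), insert (l, l') (wbeta W'))"
  shows "world_ext W' W'' \<and> bsat (\<lambda>t W v v'. bV LP Att t v v' W k) (S1(l \<mapsto> (v, t))) (S2(l' \<mapsto> (v', t))) W''"
proof -
  have d1: "l \<notin> dom (th1 W')" and d2: "l' \<notin> dom (th2 W')" using bs l l' unfolding bsat_def by blast+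
  have ext: "world_ext W' W''"
    using w d1 d2 unfolding world_ext_def is_world_def W'' th1_def th2_def wbeta_def
    by (auto simp: map_le_def)
  have vv'': "bV LP Att t v v' W'' k" using bMono(2)[of LP Att t k] vv ext by blast
  have P: "th1 W'' l1 = th2 W'' l2 \<and>
        bV LP Att (the (th1 W'' l1)) (fst (the ((S1(l \<mapsto> (v, t))) l1))) (fst (the ((S2(l' \<mapsto> (v', t))) l2))) W'' k"
    if pr: "(l1, l2) \<in> wbeta W''" for l1 l2
  proof -
    from pr consider "l1 = l" "l2 = l'" | "(l1, l2) \<in> wbeta W'" unfolding W'' wbeta_def by auto
    then show ?thesis
    proof cases
      case 1 then show ?thesis using vv'' unfolding W'' th1_def th2_def by simp
    next
      case 2
      have n: "l1 \<noteq> l" "l2 \<noteq> l'" using 2 bs d1 d2 unfolding bsat_def by blast+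
      have o: "th1 W' l1 = th2 W' l2" "bV LP Att (the (th1 W' l1)) (fst (the (S1 l1))) (fst (the (S2 l2))) W' k"
        using bs 2 unfolding bsat_def by blast+
      have o2: "bV LP Att (the (th1 W' l1)) (fst (the (S1 l1))) (fst (the (S2 l2))) W'' k"
        using bMono(2)[of LP Att "the (th1 W' l1)" k] o(2) ext by blast
      have "th1 W'' l1 = th1 W' l1" "th2 W'' l2 = th2 W' l2"
        using n unfolding W'' th1_def th2_def by auto
      then show ?thesis using n o(1) o2 by simp
    qed
  qed
  have "bsat (\<lambda>t W v v'. bV LP Att t v v' W k) (S1(l \<mapsto> (v, t))) (S2(l' \<mapsto> (v', t))) W''"
    unfolding bsat_def
  proof (intro conjI allI impI)
    show "dom (th1 W'') \<subseteq> dom (S1(l \<mapsto> (v, t)))" "dom (th2 W'') \<subseteq> dom (S2(l' \<mapsto> (v', t)))"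
      using bs unfolding bsat_def W'' th1_def th2_def by auto
    show "wbeta W'' \<subseteq> dom (th1 W'') \<times> dom (th2 W'')"
      using bs unfolding bsat_def W'' th1_def th2_def wbeta_def by auto
    fix a tt assume "th1 W'' a = Some tt"
    then show "\<exists>vv. (S1(l \<mapsto> (v, t))) a = Some (vv, tt)"
      using bs unfolding bsat_def W'' th1_def by (auto split: if_splits)
  next
    fix a tt assume "th2 W'' a = Some tt"
    then show "\<exists>vv. (S2(l' \<mapsto> (v', t))) a = Some (vv, tt)"
      using bs unfolding bsat_def W'' th2_def by (auto split: if_splits)
  qed (use P in blast)+
  then show ?thesis using ext by blast
qed


lemma new_values:
  assumes le: "lockeq LP Att L L'" and s1: "sub_lty (restr t' L) t" and s2: "sub_lty (restr t' L') t"
    and vv: "bV LP Att t' e e' W m"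
  shows "bE LP Att (Lab (TRef t) pbot) (New e t) (New e' t) W L L' m"
proof -
  have ve: "is_val e" "is_val e'" using bVal vv by blast+
  show ?thesis
    apply (subst bE_unf)
    apply (rule disjI2, rule conjI, rule le)
    apply (intro allI impI)
    apply (rule disjI1)
  proof (intro conjI allI impI)
    fix L1 L2 W' m' S1 S2 e1' S1' w L1' e2' S2' w' L2'
    assume a: "L \<subseteq> L1" "L' \<subseteq> L2" "lockeq LP Att L1 L2" "world_ext W W'" "m' < m"
      "wf_state S1" "wf_state S2" "bsat (\<lambda>t W v v'. bV LP Att t v v' W m') S1 S2 W'"
      and st1: "step (New e t) L1 S1 e1' S1' w L1'" and st2: "step (New e' t) L2 S2 e2' S2' w' L2'"
      and cond: "obs_irr LP Att (\<lambda>t W v v'. bV LP Att t v v' W m') W' w w' \<or> L1' \<subseteq> snd Att \<or> L2' \<subseteq> snd Att"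
    obtain l where l: "l \<notin> dom S1" "e1' = Loc l" "S1' = S1(l \<mapsto> (e, t))" "w = Wr l t e" "L1' = L1"
      using step_New[OF st1] ve step_not_val by blast
    obtain l' where l': "l' \<notin> dom S2" "e2' = Loc l'" "S2' = S2(l' \<mapsto> (e', t))" "w' = Wr l' t e'" "L2' = L2"
      using step_New[OF st2] ve step_not_val by blast
    have vW': "bV LP Att t' e e' W' m'" using bMono(2)[of LP Att t' m] vv a(4) less_imp_le[OF a(5)] by blast
    have C: "bV LP Att t e e' W' m'"
      using cond
    proof (elim disjE)
      assume "obs_irr LP Att (\<lambda>t W v v'. bV LP Att t v v' W m') W' w w'"
      then have "\<not> flowsA Att (lab t) \<or> bV LP Att t e e' W' m'"
        unfolding obs_irr_def l l' flowsA_o_def by auto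
      then show ?thesis using lemX[OF vW' s1] by blast
    next
      assume "L1' \<subseteq> snd Att" then show ?thesis using lemX[OF vW' s1] a(1) l by blast
    next
      assume "L2' \<subseteq> snd Att" then show ?thesis using lemX[OF vW' s2] a(2) l' by blast
    qed
    define W'' where "W'' = ((th1 W')(l \<mapsto> t), (th2 W')(l' \<mapsto> t), insert (l, l') (wbeta W'))"
    have wW': "is_world W'" using a(4) world_ext_def by blast
    have X: "world_ext W' W'' \<and> bsat (\<lambda>t W v v'. bV LP Att t v v' W m') S1' S2' W''"
      using bsat_extend[OF a(8) wW' l(1) l'(1) C W''_def] l l' by simp
    have C'': "bV LP Att t e e' W'' m'" using bMono(2)[of LP Att t m'] C X by blast
    have inb: "(l, l') \<in> wbeta W''" "th1 W'' l = Some t" "th2 W'' l' = Some t"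
      unfolding W''_def wbeta_def th1_def th2_def by auto
    show "\<exists>W''. world_ext W' W'' \<and> bsat (\<lambda>t W v v'. bV LP Att t v v' W m') S1' S2' W'' \<and>
                         obs_eq LP Att (\<lambda>t W v v'. bV LP Att t v v' W m') W'' w w' \<and>
                         bE LP Att (Lab (TRef t) pbot) e1' e2' W'' L L' m'"
    proof (intro exI conjI)
      show "world_ext W' W''" "bsat (\<lambda>t W v v'. bV LP Att t v v' W m') S1' S2' W''" using X by blast+
      show "obs_eq LP Att (\<lambda>t W v v'. bV LP Att t v v' W m') W'' w w'"
        unfolding obs_eq_def l l' flowsA_o_def using C'' inb by auto
      show "bE LP Att (Lab (TRef t) pbot) e1' e2' W'' L L' m'"
        apply (subst bE_unf) apply (rule disjI1)
        using inb l l' flowsA_pbot[of Att] by (simp add: bV_Lab bVr_simps)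
    qed
  qed simp_all
qed


lemma new_main:
  assumes le: "lockeq LP Att L L'" and s1: "sub_lty (restr t' L) t" and s2: "sub_lty (restr t' L') t"
  shows "bE LP Att t' e e' W L L' m \<Longrightarrow> bE LP Att (Lab (TRef t) pbot) (New e t) (New e' t) W L L' m"
proof (induction m arbitrary: W e e' rule: less_induct)
  case (less m)
  note IH = less.IH
  from less.prems have "bV LP Att t' e e' W m \<or>
          (lockeq LP Att L L' \<and>
           (\<forall>L1 L2 W' m' S1 S2.
              L \<subseteq> L1 \<longrightarrow> L' \<subseteq> L2 \<longrightarrow> lockeq LP Att L1 L2 \<longrightarrow> world_ext W W' \<longrightarrow> m' < m \<longrightarrow>
              wf_state S1 \<longrightarrow> wf_state S2 \<longrightarrow> bsat (\<lambda>t W v v'. bV LP Att t v v' W m') S1 S2 W' \<longrightarrow>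
              (\<not> is_val e \<and> \<not> is_val e' \<and>
               (\<forall>e1' S1' w L1' e2' S2' w' L2'.
                  step e L1 S1 e1' S1' w L1' \<longrightarrow> step e' L2 S2 e2' S2' w' L2' \<longrightarrow>
                  (obs_irr LP Att (\<lambda>t W v v'. bV LP Att t v v' W m') W' w w' \<or> L1' \<subseteq> snd Att \<or> L2' \<subseteq> snd Att) \<longrightarrow>
                  (\<exists>W''. world_ext W' W'' \<and> bsat (\<lambda>t W v v'. bV LP Att t v v' W m') S1' S2' W'' \<and>
                         obs_eq LP Att (\<lambda>t W v v'. bV LP Att t v v' W m') W'' w w' \<and> bE LP Att t' e1' e2' W'' L L' m'))) \<or>
              (\<not> is_val e \<and>
               (\<forall>e1' S1' w L1'. step e L1 S1 e1' S1' w L1' \<longrightarrow>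
                  \<not> flowsA_o LP Att w \<and>
                  (\<exists>W''. world_ext W' W'' \<and> bsat (\<lambda>t W v v'. bV LP Att t v v' W m') S1' S2 W'' \<and> bE LP Att t' e1' e' W'' L L' m'))) \<or>
              (\<not> is_val e' \<and>
               (\<forall>e2' S2' w L2'. step e' L2 S2 e2' S2' w L2' \<longrightarrow>
                  \<not> flowsA_o LP Att w \<and>
                  (\<exists>W''. world_ext W' W'' \<and> bsat (\<lambda>t W v v'. bV LP Att t v v' W m') S1 S2' W'' \<and> bE LP Att t' e e2' W'' L L' m')))))"
    by (subst (asm) bE_unf)
  then show ?case
  proof
    assume "bV LP Att t' e e' W m" then show ?thesis using new_values[OF le s1 s2] by blast
  next
    assume H: "lockeq LP Att L L' \<and> (\<forall>L1 L2 W' m' S1 S2.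
              L \<subseteq> L1 \<longrightarrow> L' \<subseteq> L2 \<longrightarrow> lockeq LP Att L1 L2 \<longrightarrow> world_ext W W' \<longrightarrow> m' < m \<longrightarrow>
              wf_state S1 \<longrightarrow> wf_state S2 \<longrightarrow> bsat (\<lambda>t W v v'. bV LP Att t v v' W m') S1 S2 W' \<longrightarrow>
              (\<not> is_val e \<and> \<not> is_val e' \<and>
               (\<forall>e1' S1' w L1' e2' S2' w' L2'.
                  step e L1 S1 e1' S1' w L1' \<longrightarrow> step e' L2 S2 e2' S2' w' L2' \<longrightarrow>
                  (obs_irr LP Att (\<lambda>t W v v'. bV LP Att t v v' W m') W' w w' \<or> L1' \<subseteq> snd Att \<or> L2' \<subseteq> snd Att) \<longrightarrow>
                  (\<exists>W''. world_ext W' W'' \<and> bsat (\<lambda>t W v v'. bV LP Att t v v' W m') S1' S2' W'' \<and>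
                         obs_eq LP Att (\<lambda>t W v v'. bV LP Att t v v' W m') W'' w w' \<and> bE LP Att t' e1' e2' W'' L L' m'))) \<or>
              (\<not> is_val e \<and>
               (\<forall>e1' S1' w L1'. step e L1 S1 e1' S1' w L1' \<longrightarrow>
                  \<not> flowsA_o LP Att w \<and>
                  (\<exists>W''. world_ext W' W'' \<and> bsat (\<lambda>t W v v'. bV LP Att t v v' W m') S1' S2 W'' \<and> bE LP Att t' e1' e' W'' L L' m'))) \<or>
              (\<not> is_val e' \<and>
               (\<forall>e2' S2' w L2'. step e' L2 S2 e2' S2' w L2' \<longrightarrow>
                  \<not> flowsA_o LP Att w \<and>
                  (\<exists>W''. world_ext W' W'' \<and> bsat (\<lambda>t W v v'. bV LP Att t v v' W m') S1 S2' W'' \<and> bE LP Att t' e e2' W'' L L' m'))))"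
    have sN1: "\<exists>e2. step e L S e2 S' w L' \<and> e1 = New e2 t" if "step (New e t) L S e1 S' w L'" "\<not> is_val e" for L S e1 S' w L'
      using step_New[OF that(1)] that(2) by blast
    have sN2: "\<exists>e2. step e' L S e2 S' w L' \<and> e1 = New e2 t" if "step (New e' t) L S e1 S' w L'" "\<not> is_val e'" for L S e1 S' w L'
      using step_New[OF that(1)] that(2) by blast
    show ?thesis
      apply (subst bE_unf)
      apply (rule disjI2, rule conjI, rule le)
      apply (intro allI impI)
      subgoal premises p for L1 L2 W' m' S1 S2
      proof -
        note D = H[THEN conjunct2, rule_format, OF p]
        note IHm = IH[OF p(5)]
        from D show ?thesis
        proof (elim disjE conjE)
          assume n1: "\<not> is_val e" and n2: "\<not> is_val e'" and P: "\<forall>e1' S1' w L1' e2' S2' w' L2'.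
                  step e L1 S1 e1' S1' w L1' \<longrightarrow> step e' L2 S2 e2' S2' w' L2' \<longrightarrow>
                  (obs_irr LP Att (\<lambda>t W v v'. bV LP Att t v v' W m') W' w w' \<or> L1' \<subseteq> snd Att \<or> L2' \<subseteq> snd Att) \<longrightarrow>
                  (\<exists>W''. world_ext W' W'' \<and> bsat (\<lambda>t W v v'. bV LP Att t v v' W m') S1' S2' W'' \<and>
                         obs_eq LP Att (\<lambda>t W v v'. bV LP Att t v v' W m') W'' w w' \<and> bE LP Att t' e1' e2' W'' L L' m')"
          show ?thesis
          proof (rule disjI1, intro conjI allI impI)
            show "\<not> is_val (New e t)" "\<not> is_val (New e' t)" by simp_all
            fix e1' S1' w L1' e2' S2' w' L2'
            assume st1: "step (New e t) L1 S1 e1' S1' w L1'" and st2: "step (New e' t) L2 S2 e2' S2' w' L2'"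
              and c: "obs_irr LP Att (\<lambda>t W v v'. bV LP Att t v v' W m') W' w w' \<or> L1' \<subseteq> snd Att \<or> L2' \<subseteq> snd Att"
            obtain a1 where a1: "step e L1 S1 a1 S1' w L1'" "e1' = New a1 t" using sN1[OF st1 n1] by blast
            obtain a2 where a2: "step e' L2 S2 a2 S2' w' L2'" "e2' = New a2 t" using sN2[OF st2 n2] by blast
            show "\<exists>W''. world_ext W' W'' \<and> bsat (\<lambda>t W v v'. bV LP Att t v v' W m') S1' S2' W'' \<and>
                         obs_eq LP Att (\<lambda>t W v v'. bV LP Att t v v' W m') W'' w w' \<and>
                         bE LP Att (Lab (TRef t) pbot) e1' e2' W'' L L' m'"
              using P[rule_format, OF a1(1) a2(1) c] IHm a1(2) a2(2) by blast
          qed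
        next
          assume n1: "\<not> is_val e" and P: "\<forall>e1' S1' w L1'. step e L1 S1 e1' S1' w L1' \<longrightarrow>
                  \<not> flowsA_o LP Att w \<and>
                  (\<exists>W''. world_ext W' W'' \<and> bsat (\<lambda>t W v v'. bV LP Att t v v' W m') S1' S2 W'' \<and> bE LP Att t' e1' e' W'' L L' m')"
          show ?thesis
          proof (rule disjI2, rule disjI1, intro conjI allI impI)
            show "\<not> is_val (New e t)" by simp
            fix e1' S1' w L1'
            assume st1: "step (New e t) L1 S1 e1' S1' w L1'"
            obtain a1 where a1: "step e L1 S1 a1 S1' w L1'" "e1' = New a1 t" using sN1[OF st1 n1] by blast
            show "\<not> flowsA_o LP Att w" using P a1 by blast
            show "\<exists>W''. world_ext W' W'' \<and> bsat (\<lambda>t W v v'. bV LP Att t v v' W m') S1' S2 W'' \<and>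
                   bE LP Att (Lab (TRef t) pbot) e1' (New e' t) W'' L L' m'"
              using P[rule_format, OF a1(1)] IHm a1(2) by blast
          qed
        next
          assume n2: "\<not> is_val e'" and P: "\<forall>e2' S2' w L2'. step e' L2 S2 e2' S2' w L2' \<longrightarrow>
                  \<not> flowsA_o LP Att w \<and>
                  (\<exists>W''. world_ext W' W'' \<and> bsat (\<lambda>t W v v'. bV LP Att t v v' W m') S1 S2' W'' \<and> bE LP Att t' e e2' W'' L L' m')"
          show ?thesis
          proof (rule disjI2, rule disjI2, intro conjI allI impI)
            show "\<not> is_val (New e' t)" by simp
            fix e2' S2' w L2'
            assume st2: "step (New e' t) L2 S2 e2' S2' w L2'"
            obtain a2 where a2: "step e' L2 S2 a2 S2' w L2'" "e2' = New a2 t" using sN2[OF st2 n2] by blast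
            show "\<not> flowsA_o LP Att w" using P a2 by blast
            show "\<exists>W''. world_ext W' W'' \<and> bsat (\<lambda>t W v v'. bV LP Att t v v' W m') S1 S2' W'' \<and>
                   bE LP Att (Lab (TRef t) pbot) (New e t) e2' W'' L L' m'"
              using P[rule_format, OF a2(1)] IHm a2(2) by blast
          qed
        qed
      qed
      done
  qed
qed

theorem mainTheorem5:
  fixes LP :: "'l \<Rightarrow> ('a, 'l) policy"
    and Att :: "('a, 'l) attacker"
    and W :: "('a, 'l) world"
    and m :: nat
    and L L' :: "'l set"
    and t t' :: "('a, 'l) lty"
    and e e' :: "('a, 'l) exp"
  assumes "is_world W"
    and "bE LP Att t' e e' W L L' m"
    and "lockeq LP Att L L'"
    and "sub_lty (restr t' L) t"
    and "sub_lty (restr t' L') t"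
  shows "bE LP Att (Lab (TRef t) pbot) (New e t) (New e' t) W L L' m"
  using new_main[OF assms(3,4,5) assms(2)] .

end
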